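(* Fix $T>0$, a closed non-trivial rectangle $I\times J\subset(0,T]\times\mathbb R^k$ and an integer $d\ge1$. For all $N>0$, $b>0$, $\tilde\gamma>\gamma>0$ and $p>\frac{2d}{\gamma}(\tilde\gamma b-2k-4)$, there is a finite constant $C=C(I,J,N,b,\gamma,\tilde\gamma,p)>0$ such that for all $a\in[0,N]$, $$\int_Idt\int_Ids\int_Jdx\int_Jdy\,\big(|t-s|^{\tilde\gamma/2}+\|x-y\|^{\tilde\gamma}\big)^{-b/2}\Big(\frac{|t-s|^{\gamma/4}+\|x-y\|^{\gamma/2}}{a}\wedge1\Big)^{p/(2d)}\le C\,K_{\frac{\tilde\gamma}{\gamma}b-\frac{4+2k}{\gamma}}(a),$$ provided the constant $N_0$ in the definition of $K_0$ is sufficiently large.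
   Context: For $\alpha\in\mathbb R$ and $r>0$: $K_\alpha(r)=r^{-\alpha}$ if $\alpha>0$; $K_0(r)=\log(N_0/r)$ for a constant $N_0$; $K_\alpha(r)=1$ if $\alpha<0$ (with $K_\alpha(0)=+\infty$ for $\alpha\ge0$). A closed non-trivial rectangle is $I\times J$ with $I\subset(0,T]$ a closed non-degenerate interval and $J=\prod_{i=1}^k[a_i,b_i]$, $a_i<b_i$. Norms are Euclidean. *)

theory Defs
  imports "HOL-Analysis.Analysis"
begin

definition Kfun :: "real \<Rightarrow> real \<Rightarrow> real \<Rightarrow> ennreal" where
  "Kfun N0 \<alpha> r =
     (if \<alpha> > 0 then (if r = 0 then \<infinity> else ennreal (r powr (-\<alpha>)))
      else if \<alpha> = 0 then (if r = 0 then \<infinity> else ennreal (ln (N0 / r)))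
      else 1)"

text \<open>The truncation (u / a) \<and> 1, with the convention u/0 = +infinity, so the value is 1 when a = 0.\<close>
definition trunc_ratio :: "real \<Rightarrow> real \<Rightarrow> real" where
  "trunc_ratio u a = (if a = 0 then 1 else min (u / a) 1)"

definition integrand ::
  "real \<Rightarrow> real \<Rightarrow> real \<Rightarrow> nat \<Rightarrow> real \<Rightarrow> real \<Rightarrow> real \<Rightarrow> real \<Rightarrow> 'a::real_normed_vector \<Rightarrow> 'a \<Rightarrow> real" where
  "integrand b \<gamma> \<gamma>' d p a t s x y =
     (\<bar>t - s\<bar> powr (\<gamma>' / 2) + norm (x - y) powr \<gamma>') powr (- b / 2) *
     (trunc_ratio (\<bar>t - s\<bar> powr (\<gamma> / 4) + norm (x - y) powr (\<gamma> / 2)) a) powr (p / (2 * real d))"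

end

theory Submission
  imports Defs
begin



definition pw :: "real \<Rightarrow> real \<Rightarrow> ennreal" where
  "pw e w = (if w = 0 then \<infinity> else ennreal (\<bar>w\<bar> powr (-e)))"
lemma pw_meas[measurable]: "pw e \<in> borel_measurable borel"
  unfolding pw_def by measurable
definition Hf :: "real \<Rightarrow> real \<Rightarrow> real \<Rightarrow> ennreal" where
  "Hf e1 e2 w = (if w = 0 then \<infinity> else ennreal (min (\<bar>w\<bar> powr (-e1)) (\<bar>w\<bar> powr (-e2))))"
lemma Hf_meas[measurable]: "Hf e1 e2 \<in> borel_measurable borel"
  unfolding Hf_def by measurable

lemma nn_reflect:
  fixes G :: "real \<Rightarrow> ennreal"
  assumes [measurable]: "G \<in> borel_measurable borel"
  shows "(\<integral>\<^sup>+w. G (c - w) \<partial>lborel) = (\<integral>\<^sup>+w. G w \<partial>lborel)"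
  using nn_integral_real_affine[OF assms, of "-1" c] by simp

lemma AE_ne0: "AE w in lborel. (w::real) \<noteq> 0"
  using AE_lborel_singleton by blast

lemma int_from0:
  assumes "e < 1" "L \<ge> 0"
  shows "(\<integral>\<^sup>+w. ennreal (w powr (-e)) * indicator {0..L} w \<partial>lborel) = ennreal (L powr (1-e) / (1-e))"
proof -
  have "((\<lambda>x. x powr (-e)) has_integral (L powr (-e+1) / (-e+1))) {0..L}"
    by (rule has_integral_powr_from_0) (use assms in auto)
  from nn_integral_has_integral_lebesgue'[OF _ this] show ?thesis by simp
qed

lemma int_to_inf:
  assumes "e > 1"
  shows "(\<integral>\<^sup>+w. ennreal (w powr (-e)) * indicator {1..} w \<partial>lborel) = ennreal (1 / (e - 1))"
proof -
  have "((\<lambda>x. x powr (-e)) has_integral (-(1 powr (-e+1)) / (-e+1))) {1..}"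
    by (rule has_integral_powr_to_inf) (use assms in auto)
  from nn_integral_has_integral_lebesgue'[OF _ this] show ?thesis
    using assms by (simp add: field_simps)
qed

lemma pw_ind_finite:
  assumes "e < 1" "L \<ge> 0"
  shows "(\<integral>\<^sup>+w. pw e w * indicator {-L..L} w \<partial>lborel) < \<infinity>"
proof -
  define F where "F w = ennreal (w powr (-e)) * indicator {0..L} w" for w
  have [measurable]: "F \<in> borel_measurable borel" unfolding F_def by measurable
  have "(\<integral>\<^sup>+w. pw e w * indicator {-L..L} w \<partial>lborel) = (\<integral>\<^sup>+w. ennreal (\<bar>w\<bar> powr (-e)) * indicator {-L..L} w \<partial>lborel)"
    apply (rule nn_integral_cong_AE) using AE_ne0 apply eventually_elim by (auto simp: pw_def)
  also have "\<dots> \<le> (\<integral>\<^sup>+w. F w + F (0 - w) \<partial>lborel)"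
    by (intro nn_integral_mono) (auto simp: F_def split: split_indicator)
  also have "\<dots> = (\<integral>\<^sup>+w. F w \<partial>lborel) + (\<integral>\<^sup>+w. F (0 - w) \<partial>lborel)"
    by (rule nn_integral_add) auto
  also have "\<dots> = 2 * ennreal (L powr (1-e) / (1-e))"
    using nn_reflect[of F 0] int_from0[OF assms] by (simp add: F_def mult_2)
  also have "\<dots> < \<infinity>" by (simp add: ennreal_mult_less_top)
  finally show ?thesis .
qed

lemma Hf_finite:
  assumes "0 \<le> e1" "e1 < 1" "1 < e2"
  shows "(\<integral>\<^sup>+w. Hf e1 e2 w \<partial>lborel) < \<infinity>"
proof -
  define F where "F w = ennreal (w powr (-e2)) * indicator {1..} w" for w
  have [measurable]: "F \<in> borel_measurable borel" unfolding F_def by measurable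
  have "(\<integral>\<^sup>+w. Hf e1 e2 w \<partial>lborel) \<le> (\<integral>\<^sup>+w. pw e1 w * indicator {-1..1} w + (F w + F (0 - w)) \<partial>lborel)"
  proof (intro nn_integral_mono)
    fix w :: real
    show "Hf e1 e2 w \<le> pw e1 w * indicator {-1..1} w + (F w + F (0 - w))"
    proof (cases "w = 0")
      case True then show ?thesis by (simp add: Hf_def pw_def)
    next
      case False
      show ?thesis
      proof (cases "\<bar>w\<bar> \<le> 1")
        case True
        then have "Hf e1 e2 w \<le> pw e1 w * indicator {-1..1} w"
          using False by (auto simp: Hf_def pw_def indicator_def)
        then show ?thesis by (rule order_trans) simp
      next
        case nt: False
        have "Hf e1 e2 w \<le> F w + F (0 - w)"
          using False nt by (auto simp: Hf_def F_def indicator_def abs_if)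
        then show ?thesis by (rule order_trans) simp
      qed
    qed
  qed
  also have "\<dots> = (\<integral>\<^sup>+w. pw e1 w * indicator {-1..1} w \<partial>lborel) + ((\<integral>\<^sup>+w. F w \<partial>lborel) + (\<integral>\<^sup>+w. F (0 - w) \<partial>lborel))"
    by (subst nn_integral_add, simp, simp, subst nn_integral_add) auto
  also have "\<dots> < \<infinity>"
    using nn_reflect[of F 0] pw_ind_finite[of e1 1] int_to_inf[of e2] assms
    by (simp add: F_def)
  finally show ?thesis .
qed

lemma scale_int:
  fixes G :: "real \<Rightarrow> ennreal"
  assumes [measurable]: "G \<in> borel_measurable borel" and "l > 0"
  shows "(\<integral>\<^sup>+w. G (w / l) \<partial>lborel) = ennreal l * (\<integral>\<^sup>+w. G w \<partial>lborel)"
  using nn_integral_real_affine[of "\<lambda>w. G (w / l)" l 0] assms by simp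




lemma inner_y:
  fixes c :: "'a::euclidean_space" and A :: "'a set"
  assumes fin: "finite S" and [measurable]: "\<And>j. G1 j \<in> borel_measurable borel"
  shows "(\<integral>\<^sup>+y. (\<Sum>j\<in>S. a j * (\<Prod>b\<in>Basis. G1 j ((c - y) \<bullet> b))) * indicator A y \<partial>lborel)
     \<le> (\<Sum>j\<in>S. a j * (\<integral>\<^sup>+w. G1 j w \<partial>lborel) ^ DIM('a))"
proof -
  have "(\<integral>\<^sup>+y. (\<Sum>j\<in>S. a j * (\<Prod>b\<in>Basis. G1 j ((c - y) \<bullet> b))) * indicator A y \<partial>lborel)
     \<le> (\<integral>\<^sup>+y. (\<Sum>j\<in>S. a j * (\<Prod>b\<in>Basis. G1 j ((c - y) \<bullet> b))) \<partial>lborel)"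
    by (intro nn_integral_mono) (auto split: split_indicator)
  also have "\<dots> = (\<Sum>j\<in>S. a j * (\<integral>\<^sup>+y. (\<Prod>b\<in>Basis. G1 j ((c - y) \<bullet> b)) \<partial>lborel))"
    by (subst nn_integral_sum) (auto simp: nn_integral_cmult)
  also have "\<dots> = (\<Sum>j\<in>S. a j * (\<integral>\<^sup>+w. G1 j w \<partial>lborel) ^ DIM('a))"
  proof (rule sum.cong[OF refl])
    fix j
    have "(\<integral>\<^sup>+y. (\<Prod>b\<in>Basis. G1 j ((c - y) \<bullet> b)) \<partial>lborel)
        = (\<integral>\<^sup>+y. (\<Prod>b\<in>Basis. (\<lambda>b w. G1 j (c \<bullet> b - w)) b (y \<bullet> b)) \<partial>lborel)"
      by (simp add: inner_diff_left)
    also have "\<dots> = (\<Prod>b\<in>Basis. (\<integral>\<^sup>+w. G1 j (c \<bullet> b - w) \<partial>lborel))"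
      by (rule nn_integral_lborel_prod) auto
    also have "\<dots> = (\<Prod>b\<in>(Basis::'a set). (\<integral>\<^sup>+w. G1 j w \<partial>lborel))"
      by (simp add: nn_reflect)
    also have "\<dots> = (\<integral>\<^sup>+w. G1 j w \<partial>lborel) ^ DIM('a)" by simp
    finally show "a j * (\<integral>\<^sup>+y. (\<Prod>b\<in>Basis. G1 j ((c - y) \<bullet> b)) \<partial>lborel) = a j * (\<integral>\<^sup>+w. G1 j w \<partial>lborel) ^ DIM('a)"
      by simp
  qed
  finally show ?thesis .
qed

lemma master:
  fixes A :: "'a::euclidean_space set" and t1 t2 :: real
  assumes fin: "finite S" and [measurable]: "\<And>j. G1 j \<in> borel_measurable borel" "\<And>j. G0 j \<in> borel_measurable borel"
    and "t1 \<le> t2" and Am: "A \<in> sets lborel"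
  shows "(\<integral>\<^sup>+t\<in>{t1..t2}. \<integral>\<^sup>+s\<in>{t1..t2}. \<integral>\<^sup>+x\<in>A. \<integral>\<^sup>+y\<in>A.
      (\<Sum>j\<in>S. G0 j (t - s) * (\<Prod>b\<in>Basis. G1 j ((x - y) \<bullet> b))) \<partial>lborel \<partial>lborel \<partial>lborel \<partial>lborel)
   \<le> (\<Sum>j\<in>S. ennreal (t2 - t1) * (\<integral>\<^sup>+w. G0 j w \<partial>lborel) * emeasure lborel A * (\<integral>\<^sup>+w. G1 j w \<partial>lborel) ^ DIM('a))"
proof -
  define P where "P j = (\<integral>\<^sup>+w. G1 j w \<partial>lborel) ^ DIM('a)" for j
  define Q where "Q j = (\<integral>\<^sup>+w. G0 j w \<partial>lborel)" for j
  have step1: "(\<integral>\<^sup>+x\<in>A. \<integral>\<^sup>+y\<in>A. (\<Sum>j\<in>S. G0 j (t - s) * (\<Prod>b\<in>Basis. G1 j ((x - y) \<bullet> b))) \<partial>lborel \<partial>lborel)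
     \<le> (\<Sum>j\<in>S. G0 j (t - s) * P j) * emeasure lborel A" for t s
  proof -
    have "(\<integral>\<^sup>+x\<in>A. \<integral>\<^sup>+y\<in>A. (\<Sum>j\<in>S. G0 j (t - s) * (\<Prod>b\<in>Basis. G1 j ((x - y) \<bullet> b))) \<partial>lborel \<partial>lborel)
       \<le> (\<integral>\<^sup>+x. (\<Sum>j\<in>S. G0 j (t - s) * P j) * indicator A x \<partial>lborel)"
      apply (intro nn_integral_mono mult_right_mono)
      using inner_y[OF fin, of G1 "\<lambda>j. G0 j (t - s)"] by (auto simp: P_def)
    also have "\<dots> = (\<Sum>j\<in>S. G0 j (t - s) * P j) * emeasure lborel A"
      using Am by (simp add: nn_integral_cmult_indicator)
    finally show ?thesis .
  qed
  have step2: "(\<integral>\<^sup>+s\<in>{t1..t2}. \<integral>\<^sup>+x\<in>A. \<integral>\<^sup>+y\<in>A. (\<Sum>j\<in>S. G0 j (t - s) * (\<Prod>b\<in>Basis. G1 j ((x - y) \<bullet> b))) \<partial>lborel \<partial>lborel \<partial>lborel)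
     \<le> (\<Sum>j\<in>S. Q j * P j * emeasure lborel A)" for t
  proof -
    have "(\<integral>\<^sup>+s\<in>{t1..t2}. \<integral>\<^sup>+x\<in>A. \<integral>\<^sup>+y\<in>A. (\<Sum>j\<in>S. G0 j (t - s) * (\<Prod>b\<in>Basis. G1 j ((x - y) \<bullet> b))) \<partial>lborel \<partial>lborel \<partial>lborel)
      \<le> (\<integral>\<^sup>+s. (\<Sum>j\<in>S. G0 j (t - s) * (P j * emeasure lborel A)) \<partial>lborel)"
      apply (intro nn_integral_mono)
      subgoal for s
        using step1[of t s] 
        by (auto split: split_indicator simp: sum_distrib_right mult.assoc intro: order_trans)
      done
    also have "\<dots> = (\<Sum>j\<in>S. (\<integral>\<^sup>+s. G0 j (t - s) \<partial>lborel) * (P j * emeasure lborel A))"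
      by (subst nn_integral_sum) (auto simp: nn_integral_multc)
    also have "\<dots> = (\<Sum>j\<in>S. Q j * P j * emeasure lborel A)"
      by (simp add: nn_reflect Q_def mult.assoc)
    finally show ?thesis .
  qed
  have "(\<integral>\<^sup>+t\<in>{t1..t2}. \<integral>\<^sup>+s\<in>{t1..t2}. \<integral>\<^sup>+x\<in>A. \<integral>\<^sup>+y\<in>A.
      (\<Sum>j\<in>S. G0 j (t - s) * (\<Prod>b\<in>Basis. G1 j ((x - y) \<bullet> b))) \<partial>lborel \<partial>lborel \<partial>lborel \<partial>lborel)
      \<le> (\<integral>\<^sup>+t. (\<Sum>j\<in>S. Q j * P j * emeasure lborel A) * indicator {t1..t2} t \<partial>lborel)"
    by (intro nn_integral_mono mult_right_mono step2) auto
  also have "\<dots> = (\<Sum>j\<in>S. Q j * P j * emeasure lborel A) * ennreal (t2 - t1)"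
    using assms(4) by (simp add: nn_integral_cmult_indicator)
  also have "\<dots> = (\<Sum>j\<in>S. ennreal (t2 - t1) * Q j * emeasure lborel A * P j)"
    by (simp add: sum_distrib_right sum_distrib_left mult_ac)
  finally show ?thesis unfolding P_def Q_def .
qed



lemma min_powr_eq:
  fixes x :: real
  assumes "x > 0" "e1 \<le> e2"
  shows "min (x powr (-e1)) (x powr (-e2)) = x powr (- (if x \<le> 1 then e1 else e2))"
proof (cases "x \<le> 1")
  case True
  have "x powr (-e1) \<le> x powr (-e2)" using powr_mono'[of "-e2" "-e1" x] True assms by simp
  then show ?thesis using True by simp
next
  case False
  have "x powr (-e2) \<le> x powr (-e1)" using powr_mono[of "-e2" "-e1" x] False assms by simp
  then show ?thesis using False by simp
qed

lemma Hf_lower: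
  assumes "\<bar>r\<bar> \<le> s" "s > 0" "0 \<le> e1"  "e1 \<le> e2"
  shows "ennreal (min (s powr (-e1)) (s powr (-e2))) \<le> Hf e1 e2 r"
proof (cases "r = 0")
  case True then show ?thesis by (simp add: Hf_def)
next
  case False
  then have r0: "\<bar>r\<bar> > 0" by simp
  have "s powr (-e1) \<le> \<bar>r\<bar> powr (-e1)" by (rule powr_mono2') (use assms r0 in auto)
  moreover have "s powr (-e2) \<le> \<bar>r\<bar> powr (-e2)" by (rule powr_mono2') (use assms r0 in auto)
  ultimately show ?thesis using False by (simp add: Hf_def min.coboundedI1 min.coboundedI2)
qed

lemma prod_bound:
  fixes f :: "'a::euclidean_space \<Rightarrow> real"
  assumes "0 \<le> e1" "e1 \<le> e2" "\<sigma> > 0" "\<bar>r0\<bar> \<le> \<sigma>^2" "\<And>b. b \<in> Basis \<Longrightarrow> \<bar>f b\<bar> \<le> \<sigma>"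
  shows "ennreal (min (\<sigma> powr (-(2 + real DIM('a)) * e1)) (\<sigma> powr (-(2 + real DIM('a)) * e2)))
     \<le> Hf e1 e2 r0 * (\<Prod>b\<in>Basis. Hf e1 e2 (f b))"
proof -
  define D where "D = real DIM('a)"
  define e where "e = (if \<sigma> \<le> 1 then e1 else e2)"
  have s2: "\<sigma>^2 > 0" using assms by simp
  have m1: "min (\<sigma> powr (-e1)) (\<sigma> powr (-e2)) = \<sigma> powr (-e)"
    using min_powr_eq[OF assms(3,2)] by (simp add: e_def)
  have m2: "min ((\<sigma>^2) powr (-e1)) ((\<sigma>^2) powr (-e2)) = (\<sigma>^2) powr (-e)"
    using min_powr_eq[OF s2 assms(2)] assms(3) by (simp add: e_def power_le_one_iff)
  have m3: "min (\<sigma> powr (-(2 + D) * e1)) (\<sigma> powr (-(2 + D) * e2)) = \<sigma> powr (-(2+D) * e)"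
  proof (cases "\<sigma> \<le> 1")
    case True
    have "-(2 + D) * e2 \<le> -(2 + D) * e1" using assms by (simp add: D_def)
    then have "\<sigma> powr (-(2 + D) * e1) \<le> \<sigma> powr (-(2 + D) * e2)" using powr_mono' True assms(3) by simp
    then show ?thesis using True by (simp add: e_def)
  next
    case False
    have "-(2 + D) * e2 \<le> -(2 + D) * e1" using assms by (simp add: D_def)
    then have "\<sigma> powr (-(2 + D) * e2) \<le> \<sigma> powr (-(2 + D) * e1)" using powr_mono False by simp
    then show ?thesis using False by (simp add: e_def)
  qed
  have "Hf e1 e2 r0 * (\<Prod>b\<in>Basis. Hf e1 e2 (f b)) \<ge> ennreal ((\<sigma>^2) powr (-e)) * (\<Prod>b\<in>(Basis::'a set). ennreal (\<sigma> powr (-e)))"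
  proof (rule mult_mono)
    show "ennreal ((\<sigma>^2) powr (-e)) \<le> Hf e1 e2 r0"
      using Hf_lower[OF assms(4) s2 assms(1,2)] m2 by simp
    show "(\<Prod>b\<in>(Basis::'a set). ennreal (\<sigma> powr (-e))) \<le> (\<Prod>b\<in>Basis. Hf e1 e2 (f b))"
      by (rule prod_mono_ennreal) (use Hf_lower[OF assms(5) assms(3) assms(1,2)] m1 in auto)
  qed auto
  moreover have "ennreal ((\<sigma>^2) powr (-e)) * (\<Prod>b\<in>(Basis::'a set). ennreal (\<sigma> powr (-e))) = ennreal (\<sigma> powr (-(2+D) * e))"
  proof -
    have "(\<sigma>^2) powr (-e) * (\<sigma> powr (-e)) ^ DIM('a) = \<sigma> powr (-(2+D) * e)"
    proof -
      have a: "\<sigma>^2 = \<sigma> powr 2" using assms(3) by (simp add: powr_numeral)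
      have "(\<sigma>^2) powr (-e) = \<sigma> powr (2 * (-e))" unfolding a by (simp add: powr_powr)
      moreover have "(\<sigma> powr (-e)) ^ DIM('a) = \<sigma> powr (D * (-e))"
        using assms(3) by (simp add: powr_power D_def)
      ultimately have "(\<sigma>^2) powr (-e) * (\<sigma> powr (-e)) ^ DIM('a) = \<sigma> powr (2 * (-e) + D * (-e))"
        by (simp only: powr_add)
      also have "2 * (-e) + D * (-e) = -(2+D) * e" by (simp add: algebra_simps)
      finally show ?thesis .
    qed
    then show ?thesis by (simp add: ennreal_mult'[symmetric] ennreal_power)
  qed
  ultimately show ?thesis using m3 by (simp add: D_def)
qed





lemma sqrt_powr: "u \<ge> 0 \<Longrightarrow> sqrt u powr c = u powr (c / 2)"
  by (simp add: powr_half_sqrt[symmetric] powr_powr)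

lemma rho_bounds:
  fixes u v \<rho> \<gamma> \<gamma>' b :: real
  assumes u: "u \<ge> 0" and v: "v \<ge> 0" and rho: "\<rho> = max (sqrt u) v" "\<rho> > 0"
    and g: "\<gamma> > 0" "\<gamma>' > 0" "b > 0"
  shows "(u powr (\<gamma>'/2) + v powr \<gamma>') powr (-b/2) \<le> \<rho> powr (-(\<gamma>'*b/2))"
    and "\<rho> powr (\<gamma>/2) \<le> u powr (\<gamma>/4) + v powr (\<gamma>/2)"
    and "u powr (\<gamma>/4) + v powr (\<gamma>/2) \<le> 2 * \<rho> powr (\<gamma>/2)"
proof -
  have e1: "u powr (\<gamma>'/2) = sqrt u powr \<gamma>'" using sqrt_powr[OF u] by simp
  have e2: "u powr (\<gamma>/4) = sqrt u powr (\<gamma>/2)" using sqrt_powr[OF u, of "\<gamma>/2"] by simp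
  have A: "\<rho> powr \<gamma>' \<le> sqrt u powr \<gamma>' + v powr \<gamma>'"
    using rho by (cases "sqrt u \<le> v") (auto simp: max_def)
  have "(u powr (\<gamma>'/2) + v powr \<gamma>') powr (-b/2) \<le> (\<rho> powr \<gamma>') powr (-b/2)"
    unfolding e1 by (rule powr_mono2') (use A g rho in auto)
  also have "\<dots> = \<rho> powr (-(\<gamma>'*b/2))" by (simp add: powr_powr)
  finally show "(u powr (\<gamma>'/2) + v powr \<gamma>') powr (-b/2) \<le> \<rho> powr (-(\<gamma>'*b/2))" .
  show "\<rho> powr (\<gamma>/2) \<le> u powr (\<gamma>/4) + v powr (\<gamma>/2)"
    unfolding e2 using rho by (cases "sqrt u \<le> v") (auto simp: max_def)
  have "sqrt u powr (\<gamma>/2) \<le> \<rho> powr (\<gamma>/2)" by (rule powr_mono2) (use rho g u in auto)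
  moreover have "v powr (\<gamma>/2) \<le> \<rho> powr (\<gamma>/2)" by (rule powr_mono2) (use rho g v in auto)
  ultimately show "u powr (\<gamma>/4) + v powr (\<gamma>/2) \<le> 2 * \<rho> powr (\<gamma>/2)" unfolding e2 by simp
qed

lemma trunc_bounds:
  assumes "a > 0" "0 < Y" "Y \<le> U" "U \<le> 2 * Y"
  shows "0 \<le> trunc_ratio U a" "trunc_ratio U a \<le> 1"
    "trunc_ratio U a \<le> min (2 * Y / a) 1" "min (Y / a) 1 \<le> trunc_ratio U a"
  using assms by (auto simp: trunc_ratio_def min_def divide_right_mono)

lemma trunc_01: "U \<ge> 0 \<Longrightarrow> a \<ge> 0 \<Longrightarrow> 0 \<le> trunc_ratio U a \<and> trunc_ratio U a \<le> 1"
  by (auto simp: trunc_ratio_def)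




lemma mono4:
  fixes A :: "'a::euclidean_space set"
  assumes "\<And>t s x y. t \<in> I \<Longrightarrow> s \<in> I \<Longrightarrow> x \<in> A \<Longrightarrow> y \<in> A \<Longrightarrow> f t s x y \<le> g t s x y"
  shows "(\<integral>\<^sup>+t\<in>I. \<integral>\<^sup>+s\<in>I. \<integral>\<^sup>+x\<in>A. \<integral>\<^sup>+y\<in>A. f t s x y \<partial>lborel \<partial>lborel \<partial>lborel \<partial>lborel)
    \<le> (\<integral>\<^sup>+t\<in>I. \<integral>\<^sup>+s\<in>I. \<integral>\<^sup>+x\<in>A. \<integral>\<^sup>+y\<in>A. g t s x y \<partial>lborel \<partial>lborel \<partial>lborel \<partial>lborel)"
  using assms
  by (intro nn_integral_mono) (auto split: split_indicator intro!: nn_integral_mono)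

lemma Hf_same: "Hf e e = pw e"
  by (auto simp: fun_eq_iff Hf_def pw_def)

lemma cbox_diff_bound:
  fixes aJ bJ :: "'a::euclidean_space"
  obtains B where "B > 0" "\<And>x y. x \<in> cbox aJ bJ \<Longrightarrow> y \<in> cbox aJ bJ \<Longrightarrow> norm (x - y) \<le> B"
proof -
  obtain B0 where B0: "B0 > 0" "\<And>x. x \<in> cbox aJ bJ \<Longrightarrow> norm x \<le> B0"
    using bounded_cbox[of aJ bJ] unfolding bounded_pos by blast
  have "norm (x - y) \<le> 2 * B0" if "x \<in> cbox aJ bJ" "y \<in> cbox aJ bJ" for x y
    using norm_triangle_ineq4[of x y] B0(2)[OF that(1)] B0(2)[OF that(2)] by linarith
  with B0(1) show ?thesis using that[of "2 * B0"] by auto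
qed

locale L23 =
  fixes t1 t2 :: real and aJ bJ :: "'a::euclidean_space" and N b \<gamma> \<gamma>' p :: real and d :: nat
  assumes t12: "t1 < t2" and Npos: "N > 0" and bpos: "b > 0" and gpos: "\<gamma> > 0" and gg: "\<gamma>' > \<gamma>"
    and dpos: "d \<ge> 1"
    and pbig: "p > 2 * real d / \<gamma> * (\<gamma>' * b - 2 * real DIM('a) - 4)"
begin

definition "kk = real DIM('a)"
definition "n = 2 + kk"
definition "\<beta> = \<gamma>' * b / 2"
definition "q = p / (2 * real d)"
definition "m = \<gamma> * q / 2"
definition "\<alpha> = \<gamma>' / \<gamma> * b - (4 + 2 * kk) / \<gamma>"
definition "rho t s x y = max (sqrt \<bar>t - s\<bar>) (norm (x - y :: 'a))"
definition "FF a = (\<integral>\<^sup>+ t \<in> {t1..t2}. \<integral>\<^sup>+ s \<in> {t1..t2}. \<integral>\<^sup>+ x \<in> cbox aJ bJ. \<integral>\<^sup>+ y \<in> cbox aJ bJ.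
                  ennreal (integrand b \<gamma> \<gamma>' d p a t s x y) \<partial>lborel \<partial>lborel \<partial>lborel \<partial>lborel)"

lemma gpos': "\<gamma>' > 0" using gg gpos by simp
lemma betapos: "\<beta> > 0" using gpos' bpos by (simp add: \<beta>_def)
lemma npos: "n > 0" by (simp add: n_def kk_def)
lemma n_ge2: "n \<ge> 2" by (simp add: n_def kk_def)

lemma m_gt: "m > \<beta> - n"
proof -
  have dd: "real d > 0" using dpos by simp
  have "p / (2 * real d) > (\<gamma>' * b - 2 * kk - 4) / \<gamma>"
    using pbig dd gpos by (simp add: field_simps kk_def)
  then have "\<gamma> * (p / (2 * real d)) > \<gamma>' * b - 2 * kk - 4"
    using gpos by (simp add: field_simps)
  then show ?thesis by (simp add: m_def q_def \<beta>_def n_def field_simps)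
qed

lemma alpha_eq: "\<alpha> = (2 * \<beta> - 2 * n) / \<gamma>"
  using gpos by (simp add: \<alpha>_def \<beta>_def n_def field_simps)

lemma q_eq: "q = 2 * m / \<gamma>" using gpos by (simp add: m_def)

lemma rho_nonneg: "rho t s x y \<ge> 0" by (simp add: rho_def le_max_iff_disj)

lemma rho0: "rho t s x y = 0 \<Longrightarrow> integrand b \<gamma> \<gamma>' d p a t s x y = 0"
  by (auto simp: rho_def integrand_def max_def split: if_splits)

lemma integrand_le:
  assumes "rho t s x y > 0"
  shows "integrand b \<gamma> \<gamma>' d p a t s x y \<le> rho t s x y powr (-\<beta>) *
           trunc_ratio (\<bar>t - s\<bar> powr (\<gamma> / 4) + norm (x - y) powr (\<gamma> / 2)) a powr q"
    and "rho t s x y powr (\<gamma>/2) \<le> \<bar>t - s\<bar> powr (\<gamma> / 4) + norm (x - y) powr (\<gamma> / 2)"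
    and "\<bar>t - s\<bar> powr (\<gamma> / 4) + norm (x - y) powr (\<gamma> / 2) \<le> 2 * rho t s x y powr (\<gamma>/2)"
proof -
  note rb = rho_bounds[of "\<bar>t-s\<bar>" "norm (x-y)" "rho t s x y" \<gamma> \<gamma>' b, OF _ _ rho_def assms gpos gpos' bpos]
  show "integrand b \<gamma> \<gamma>' d p a t s x y \<le> rho t s x y powr (-\<beta>) *
           trunc_ratio (\<bar>t - s\<bar> powr (\<gamma> / 4) + norm (x - y) powr (\<gamma> / 2)) a powr q"
    unfolding integrand_def q_def \<beta>_def by (rule mult_right_mono) (use rb(1) in auto)
  show "rho t s x y powr (\<gamma>/2) \<le> \<bar>t - s\<bar> powr (\<gamma> / 4) + norm (x - y) powr (\<gamma> / 2)"
    using rb(2) by simp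
  show "\<bar>t - s\<bar> powr (\<gamma> / 4) + norm (x - y) powr (\<gamma> / 2) \<le> 2 * rho t s x y powr (\<gamma>/2)"
    using rb(3) by simp
qed

lemma domain:
  obtains R L where "R > 0" "L > 0"
    "\<And>t s x y. t \<in> {t1..t2} \<Longrightarrow> s \<in> {t1..t2} \<Longrightarrow> x \<in> cbox aJ bJ \<Longrightarrow> y \<in> cbox aJ bJ \<Longrightarrow>
       rho t s x y \<le> R \<and> \<bar>t - s\<bar> \<le> L \<and> (\<forall>i\<in>Basis. \<bar>(x - y) \<bullet> i\<bar> \<le> L)"
proof -
  obtain B where B: "B > 0" "\<And>x y. x \<in> cbox aJ bJ \<Longrightarrow> y \<in> cbox aJ bJ \<Longrightarrow> norm (x - y) \<le> B"
    by (rule cbox_diff_bound[of aJ bJ]) blast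
  define R where "R = max (sqrt (t2 - t1)) B"
  define L where "L = max (t2 - t1) B"
  have "R > 0" "L > 0" using B t12 by (auto simp: R_def L_def)
  moreover have "rho t s x y \<le> R \<and> \<bar>t - s\<bar> \<le> L \<and> (\<forall>i\<in>Basis. \<bar>(x - y) \<bullet> i\<bar> \<le> L)"
    if "t \<in> {t1..t2}" "s \<in> {t1..t2}" "x \<in> cbox aJ bJ" "y \<in> cbox aJ bJ" for t s x y
  proof -
    have ts: "\<bar>t - s\<bar> \<le> t2 - t1" using that by auto
    have xy: "norm (x - y) \<le> B" using B that by auto
    have "sqrt \<bar>t - s\<bar> \<le> sqrt (t2 - t1)" using ts by simp
    then have "rho t s x y \<le> R" using xy unfolding rho_def R_def by (rule max.mono)
    moreover have "\<forall>i\<in>Basis. \<bar>(x - y) \<bullet> i\<bar> \<le> L"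
    proof
      fix i :: 'a assume "i \<in> Basis"
      then have "\<bar>(x - y) \<bullet> i\<bar> \<le> norm (x - y)" by (rule Basis_le_norm)
      then show "\<bar>(x - y) \<bullet> i\<bar> \<le> L" using xy unfolding L_def by linarith
    qed
    ultimately show ?thesis using ts by (auto simp: L_def)
  qed
  ultimately show ?thesis using that by blast
qed

end



lemma master1:
  fixes A :: "'a::euclidean_space set" and t1 t2 :: real
  assumes [measurable]: "G1 \<in> borel_measurable borel" "G0 \<in> borel_measurable borel"
    and "t1 \<le> t2" and Am: "A \<in> sets lborel"
  shows "(\<integral>\<^sup>+t\<in>{t1..t2}. \<integral>\<^sup>+s\<in>{t1..t2}. \<integral>\<^sup>+x\<in>A. \<integral>\<^sup>+y\<in>A.
      G0 (t - s) * (\<Prod>b\<in>Basis. G1 ((x - y) \<bullet> b)) \<partial>lborel \<partial>lborel \<partial>lborel \<partial>lborel)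
   \<le> ennreal (t2 - t1) * (\<integral>\<^sup>+w. G0 w \<partial>lborel) * emeasure lborel A * (\<integral>\<^sup>+w. G1 w \<partial>lborel) ^ DIM('a)"
  using master[of "{()}" "\<lambda>_. G1" "\<lambda>_. G0" t1 t2 A] assms by simp

lemma fin_const:
  assumes "V < top" shows "\<exists>C>0. V \<le> ennreal (C::real)"
proof (intro exI conjI)
  show "0 < enn2real V + 1" using enn2real_nonneg[of V] by linarith
  have "V = ennreal (enn2real V)" using assms by (simp add: ennreal_enn2real)
  also have "\<dots> \<le> ennreal (enn2real V + 1)" by (rule ennreal_leI) simp
  finally show "V \<le> ennreal (enn2real V + 1)" .
qed

context L23 begin

lemma rho_ge:
  "\<bar>t - s\<bar> \<le> (rho t s x y)^2" "\<And>i. i \<in> Basis \<Longrightarrow> \<bar>(x - y) \<bullet> i\<bar> \<le> rho t s x y"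
proof -
  have "sqrt \<bar>t - s\<bar> \<le> rho t s x y" by (simp add: rho_def)
  then have "(sqrt \<bar>t - s\<bar>)^2 \<le> (rho t s x y)^2" by (rule power_mono) simp
  then show "\<bar>t - s\<bar> \<le> (rho t s x y)^2" by simp
  fix i :: 'a assume "i \<in> Basis"
  then have "\<bar>(x - y) \<bullet> i\<bar> \<le> norm (x - y)" by (rule Basis_le_norm)
  also have "\<dots> \<le> rho t s x y" by (simp add: rho_def)
  finally show "\<bar>(x - y) \<bullet> i\<bar> \<le> rho t s x y" .
qed

lemma case_neg:
  assumes "\<alpha> < 0"
  shows "\<exists>C>0. \<forall>a\<in>{0..N}. FF a \<le> ennreal C"
proof -
  obtain R L where RL: "R > 0" "L > 0"
    "\<And>t s x y. t \<in> {t1..t2} \<Longrightarrow> s \<in> {t1..t2} \<Longrightarrow> x \<in> cbox aJ bJ \<Longrightarrow> y \<in> cbox aJ bJ \<Longrightarrow>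
       rho t s x y \<le> R \<and> \<bar>t - s\<bar> \<le> L \<and> (\<forall>i\<in>Basis. \<bar>(x - y) \<bullet> i\<bar> \<le> L)"
    by (rule domain) blast
  have bn: "\<beta> < n" using assms gpos by (simp add: alpha_eq divide_less_0_iff)
  define c where "c = (if q \<ge> 0 then \<beta> else \<beta> - m)"
  have mq: "q < 0 \<Longrightarrow> m < 0" using gpos by (simp add: m_def mult_pos_neg)
  have cb: "c \<ge> \<beta>" using mq by (auto simp: c_def)
  have cn: "c < n" using bn m_gt by (auto simp: c_def)
  have c0: "c > 0" using cb betapos by simp
  define C1 where "C1 = R powr (c - \<beta>) + N powr (-q)"
  have C1pos: "C1 > 0" using RL Npos by (simp add: C1_def add_pos_pos)
  have pt: "integrand b \<gamma> \<gamma>' d p a t s x y \<le> C1 * rho t s x y powr (-c)"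
    if rp: "rho t s x y > 0" and rR: "rho t s x y \<le> R" and a: "a \<in> {0..N}" for a t s x y
  proof -
    define \<rho> where "\<rho> = rho t s x y"
    define U where "U = \<bar>t - s\<bar> powr (\<gamma> / 4) + norm (x - y) powr (\<gamma> / 2)"
    define T where "T = trunc_ratio U a"
    have r0: "\<rho> > 0" using rp by (simp add: \<rho>_def)
    have I1: "integrand b \<gamma> \<gamma>' d p a t s x y \<le> \<rho> powr (-\<beta>) * T powr q"
      using integrand_le(1)[OF rp] by (simp add: \<rho>_def T_def U_def)
    have rb: "\<rho> powr (-\<beta>) \<le> R powr (c - \<beta>) * \<rho> powr (-c)"
    proof -
      have "\<rho> powr (-\<beta>) = \<rho> powr (c - \<beta>) * \<rho> powr (-c)" by (simp add: powr_add[symmetric])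
      also have "\<dots> \<le> R powr (c - \<beta>) * \<rho> powr (-c)"
        by (intro mult_right_mono powr_mono2) (use cb r0 rR in \<open>auto simp: \<rho>_def\<close>)
      finally show ?thesis .
    qed
    have T01: "0 \<le> T" "T \<le> 1" using trunc_01[of U a] a by (auto simp: T_def U_def)
    show ?thesis
    proof (cases "q \<ge> 0 \<or> a = 0")
      case True
      have "T powr q \<le> 1"
      proof (cases "q \<ge> 0")
        case True then show ?thesis using T01 by (intro powr_le1) auto
      next
        case False then have "a = 0" using \<open>q \<ge> 0 \<or> a = 0\<close> by simp
        then show ?thesis by (simp add: T_def trunc_ratio_def)
      qed
      then have "integrand b \<gamma> \<gamma>' d p a t s x y \<le> \<rho> powr (-\<beta>)"
        using I1 mult_left_mono[OF \<open>T powr q \<le> 1\<close>, of "\<rho> powr (-\<beta>)"] by simp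
      also have "\<dots> \<le> C1 * \<rho> powr (-c)"
      proof -
        have "0 \<le> N powr (-q) * \<rho> powr (-c)" by simp
        then show ?thesis using rb unfolding C1_def distrib_right by linarith
      qed
      finally show ?thesis by (simp add: \<rho>_def)
    next
      case False
      then have q0: "q < 0" and apos: "a > 0" using a by auto
      define Y where "Y = \<rho> powr (\<gamma>/2)"
      have Y0: "Y > 0" using r0 by (simp add: Y_def)
      have UY: "Y \<le> U" "U \<le> 2 * Y" using integrand_le(2,3)[OF rp] by (auto simp: Y_def U_def \<rho>_def)
      have lowT: "min (Y / a) 1 \<le> T" using trunc_bounds(4)[OF apos Y0 UY] by (simp add: T_def)
      have mpos: "min (Y / a) 1 > 0" using Y0 apos by simp
      have "T powr q \<le> (min (Y / a) 1) powr q"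
        by (rule powr_mono2') (use q0 mpos lowT in auto)
      also have "\<dots> \<le> (Y / a) powr q + 1"
        by (cases "Y / a \<le> 1") (auto simp: min_def)
      also have "(Y / a) powr q = \<rho> powr m * a powr (-q)"
      proof -
        have "(Y / a) powr q = Y powr q / a powr q" using Y0 apos by (simp add: powr_divide)
        also have "Y powr q = \<rho> powr m" unfolding Y_def m_def by (simp add: powr_powr)
        also have "\<rho> powr m / a powr q = \<rho> powr m * a powr (-q)" by (simp add: powr_minus divide_inverse)
        finally show ?thesis .
      qed
      also have "\<dots> \<le> \<rho> powr m * N powr (-q)"
        by (intro mult_left_mono powr_mono2) (use q0 a apos in auto)
      finally have Tq: "T powr q \<le> \<rho> powr m * N powr (-q) + 1" by simp
      have "integrand b \<gamma> \<gamma>' d p a t s x y \<le> \<rho> powr (-\<beta>) * (\<rho> powr m * N powr (-q) + 1)"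
        using I1 mult_left_mono[OF Tq, of "\<rho> powr (-\<beta>)"] by simp
      also have "\<dots> = N powr (-q) * \<rho> powr (-c) + \<rho> powr (-\<beta>)"
        using q0 by (simp add: c_def algebra_simps powr_add[symmetric])
      also have "\<dots> \<le> N powr (-q) * \<rho> powr (-c) + R powr (c - \<beta>) * \<rho> powr (-c)"
        using rb by simp
      also have "\<dots> = C1 * \<rho> powr (-c)" by (simp add: C1_def algebra_simps)
      finally show ?thesis by (simp add: \<rho>_def)
    qed
  qed
  define e where "e = c / n"
  have e01: "0 \<le> e" "e < 1" using c0 cn npos by (auto simp: e_def)
  have ne: "(2 + real DIM('a)) * e = c" using npos by (simp add: e_def n_def kk_def)
  have ne2: "(- 2 - real DIM('a)) * e = -c"
  proof -
    have "(- 2 - real DIM('a)) * e = - ((2 + real DIM('a)) * e)" by (simp add: algebra_simps)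
    then show ?thesis using ne by simp
  qed
  define G1 where "G1 w = pw e w * indicator {-L..L} w" for w
  define G0 where "G0 w = ennreal C1 * G1 w" for w
  have [measurable]: "G1 \<in> borel_measurable borel" "G0 \<in> borel_measurable borel"
    unfolding G1_def G0_def by measurable
  have ptE: "ennreal (integrand b \<gamma> \<gamma>' d p a t s x y) \<le> G0 (t - s) * (\<Prod>i\<in>Basis. G1 ((x - y) \<bullet> i))"
    if a: "a \<in> {0..N}" and dom: "t \<in> {t1..t2}" "s \<in> {t1..t2}" "x \<in> cbox aJ bJ" "y \<in> cbox aJ bJ" for a t s x y
  proof (cases "rho t s x y = 0")
    case True then show ?thesis by (simp add: rho0)
  next
    case False
    then have rp: "rho t s x y > 0" using rho_nonneg[of t s x y] by simp
    note D = RL(3)[OF dom]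
    have "ennreal (integrand b \<gamma> \<gamma>' d p a t s x y) \<le> ennreal (C1 * rho t s x y powr (-c))"
      using pt[OF rp _ a] D by (intro ennreal_leI) auto
    also have "\<dots> = ennreal C1 * ennreal (min (rho t s x y powr (-(2 + real DIM('a)) * e)) (rho t s x y powr (-(2 + real DIM('a)) * e)))"
      using C1pos by (simp add: ennreal_mult ne2)
    also have "\<dots> \<le> ennreal C1 * (Hf e e (t - s) * (\<Prod>i\<in>Basis. Hf e e ((x - y) \<bullet> i)))"
      by (intro mult_left_mono prod_bound) (use e01 rp rho_ge in auto)
    also have "\<dots> = G0 (t - s) * (\<Prod>i\<in>Basis. G1 ((x - y) \<bullet> i))"
    proof -
      have "(\<Prod>i\<in>Basis. G1 ((x - y) \<bullet> i)) = (\<Prod>i\<in>Basis. Hf e e ((x - y) \<bullet> i))"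
        by (rule prod.cong) (use D in \<open>auto simp: G1_def Hf_same abs_le_iff\<close>)
      moreover have "G0 (t - s) = ennreal C1 * Hf e e (t - s)"
        using D by (auto simp: G0_def G1_def Hf_same abs_le_iff)
      ultimately show ?thesis by (simp add: mult.assoc)
    qed
    finally show ?thesis .
  qed
  define V where "V = ennreal (t2 - t1) * (\<integral>\<^sup>+w. G0 w \<partial>lborel) * emeasure lborel (cbox aJ bJ) * (\<integral>\<^sup>+w. G1 w \<partial>lborel) ^ DIM('a)"
  have G1fin: "(\<integral>\<^sup>+w. G1 w \<partial>lborel) < top"
    unfolding G1_def using pw_ind_finite[OF e01(2), of L] RL by simp
  have G0fin: "(\<integral>\<^sup>+w. G0 w \<partial>lborel) < top"
    unfolding G0_def using G1fin by (simp add: nn_integral_cmult ennreal_mult_less_top)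
  have Vfin: "V < top"
    unfolding V_def using G1fin G0fin emeasure_lborel_cbox_finite[of aJ bJ]
    by (simp add: ennreal_mult_less_top power_less_top_ennreal)
  have FFV: "FF a \<le> V" if a: "a \<in> {0..N}" for a
  proof -
    have "FF a \<le> (\<integral>\<^sup>+t\<in>{t1..t2}. \<integral>\<^sup>+s\<in>{t1..t2}. \<integral>\<^sup>+x\<in>cbox aJ bJ. \<integral>\<^sup>+y\<in>cbox aJ bJ.
      G0 (t - s) * (\<Prod>b\<in>Basis. G1 ((x - y) \<bullet> b)) \<partial>lborel \<partial>lborel \<partial>lborel \<partial>lborel)"
      unfolding FF_def by (rule mono4) (rule ptE[OF a])
    also have "\<dots> \<le> V" unfolding V_def using t12 by (intro master1) auto
    finally show ?thesis .
  qed
  obtain C where "C > 0" "V \<le> ennreal C" using fin_const[OF Vfin] by blast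
  then show ?thesis using FFV by (meson order_trans)
qed

end



lemma min_pow_trunc:
  fixes X r :: real
  assumes "X \<ge> 0" "r > 0"
  shows "min X 1 powr r = min (X powr r) 1"
proof (cases "X \<le> 1")
  case True
  have "X powr r \<le> 1 powr r" using assms True by (intro powr_mono2) auto
  then have "X powr r \<le> 1" by simp
  then show ?thesis using True by (simp add: min_def)
next
  case False
  then have "1 \<le> X powr r" using assms by (simp add: ge_one_powr_ge_zero)
  then show ?thesis using False by (simp add: min_def)
qed

context L23 begin

lemma scaled_prod:
  assumes "l > 0" "0 \<le> e1" "e1 \<le> e2" "rho t s x y > 0"
  shows "ennreal (min ((rho t s x y / l) powr (-(2 + real DIM('a)) * e1)) ((rho t s x y / l) powr (-(2 + real DIM('a)) * e2)))
    \<le> Hf e1 e2 ((t - s) / l^2) * (\<Prod>i\<in>Basis. Hf e1 e2 (((x - y) \<bullet> i) / l))"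
proof (rule prod_bound)
  show "rho t s x y / l > 0" using assms by simp
  show "\<bar>(t - s) / l\<^sup>2\<bar> \<le> (rho t s x y / l)\<^sup>2"
    using rho_ge(1)[of t s x y] assms by (simp add: power_divide divide_right_mono)
  show "\<bar>((x - y) \<bullet> i) / l\<bar> \<le> rho t s x y / l" if "i \<in> Basis" for i
    using rho_ge(2)[OF that, of x y t s] assms by (simp add: divide_right_mono)
qed (use assms in auto)

lemma case_pos:
  assumes apos: "\<alpha> > 0"
  shows "\<exists>C>0. \<forall>a\<in>{0<..N}. FF a \<le> ennreal C * ennreal (a powr (-\<alpha>))"
proof -
  have bn: "\<beta> > n" using assms gpos by (simp add: alpha_eq zero_less_divide_iff)
  define m' where "m' = min m \<beta>"
  have m'gt: "m' > \<beta> - n" using m_gt bn npos by (simp add: m'_def)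
  have m'pos: "m' > 0" using m'gt bn npos by (simp add: m'_def betapos)
  have m'le: "m' \<le> m" "m' \<le> \<beta>" by (auto simp: m'_def)
  define q' where "q' = 2 * m' / \<gamma>"
  have q'pos: "q' > 0" using m'pos gpos by (simp add: q'_def)
  have q'le: "q' \<le> q" using m'le gpos by (simp add: q'_def q_eq divide_right_mono)
  define e1 where "e1 = (\<beta> - m') / n"
  define e2 where "e2 = \<beta> / n"
  have e: "0 \<le> e1" "e1 < 1" "1 < e2" "e1 \<le> e2"
    using m'le m'gt bn npos m'pos by (auto simp: e1_def e2_def divide_right_mono)
  have ne1: "(- 2 - real DIM('a)) * e1 = m' - \<beta>" using npos by (simp add: e1_def n_def kk_def field_simps)
  have ne2: "(- 2 - real DIM('a)) * e2 = - \<beta>" using npos by (simp add: e2_def n_def kk_def field_simps)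
  have ne1': "- (2 + real DIM('a)) * e1 = m' - \<beta>" using ne1 by simp
  have ne2': "- (2 + real DIM('a)) * e2 = - \<beta>" using ne2 by simp
  define IH where "IH = (\<integral>\<^sup>+w. Hf e1 e2 w \<partial>lborel)"
  have IHfin: "IH < top" unfolding IH_def using Hf_finite[OF e(1,2,3)] by simp
  define W where "W = ennreal (t2 - t1) * IH * emeasure lborel (cbox aJ bJ) * IH ^ DIM('a)"
  have Wfin: "W < top" unfolding W_def using IHfin emeasure_lborel_cbox_finite[of aJ bJ]
    by (simp add: ennreal_mult_less_top power_less_top_ennreal)
  obtain C0 where C0: "C0 > 0" "W \<le> ennreal C0" using fin_const[OF Wfin] by blast
  have main: "FF a \<le> ennreal C0 * ennreal (2 powr \<alpha>) * ennreal (a powr (-\<alpha>))" if a: "a \<in> {0<..N}" for a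
  proof -
    have a0: "a > 0" using a by simp
    define \<rho>0 where "\<rho>0 = (a / 2) powr (2 / \<gamma>)"
    have r0pos: "\<rho>0 > 0" using a0 by (simp add: \<rho>0_def)
    have r0g: "\<rho>0 powr (\<gamma> / 2) = a / 2" using a0 gpos by (simp add: \<rho>0_def powr_powr)
    define G0 where "G0 w = ennreal (\<rho>0 powr (-\<beta>)) * Hf e1 e2 (w / \<rho>0^2)" for w
    define G1 where "G1 w = Hf e1 e2 (w / \<rho>0)" for w
    have [measurable]: "G1 \<in> borel_measurable borel" "G0 \<in> borel_measurable borel"
      unfolding G1_def G0_def by measurable
    have pt: "ennreal (integrand b \<gamma> \<gamma>' d p a t s x y) \<le> G0 (t - s) * (\<Prod>i\<in>Basis. G1 ((x - y) \<bullet> i))" for t s and x y :: 'a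
    proof (cases "rho t s x y = 0")
      case True then show ?thesis by (simp add: rho0)
    next
      case False
      then have rp: "rho t s x y > 0" using rho_nonneg[of t s x y] by simp
      define \<rho> where "\<rho> = rho t s x y"
      define \<sigma> where "\<sigma> = \<rho> / \<rho>0"
      have rpos: "\<rho> > 0" using rp by (simp add: \<rho>_def)
      have spos: "\<sigma> > 0" using rpos r0pos by (simp add: \<sigma>_def)
      define U where "U = \<bar>t - s\<bar> powr (\<gamma> / 4) + norm (x - y) powr (\<gamma> / 2)"
      define T where "T = trunc_ratio U a"
      define Y where "Y = \<rho> powr (\<gamma>/2)"
      have Y0: "Y > 0" using rpos by (simp add: Y_def)
      have UY: "Y \<le> U" "U \<le> 2 * Y" using integrand_le(2,3)[OF rp] by (auto simp: Y_def U_def \<rho>_def)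
      note tb = trunc_bounds[OF a0 Y0 UY]
      have I1: "integrand b \<gamma> \<gamma>' d p a t s x y \<le> \<rho> powr (-\<beta>) * T powr q"
        using integrand_le(1)[OF rp] by (simp add: \<rho>_def T_def U_def)
      have X: "2 * Y / a = \<sigma> powr (\<gamma>/2)"
      proof -
        have "\<sigma> powr (\<gamma>/2) = \<rho> powr (\<gamma>/2) / \<rho>0 powr (\<gamma>/2)" using rpos r0pos by (simp add: \<sigma>_def powr_divide)
        also have "\<dots> = Y / (a / 2)" by (simp only: r0g Y_def)
        finally have "\<sigma> powr (\<gamma>/2) = Y / (a / 2)" .
        then show ?thesis using a0 by simp
      qed
      have "T powr q \<le> T powr q'"
        using tb q'le by (intro powr_mono') (auto simp: T_def)
      also have "\<dots> \<le> min (2 * Y / a) 1 powr q'"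
        using tb q'pos by (intro powr_mono2) (auto simp: T_def)
      also have "\<dots> = min ((2 * Y / a) powr q') 1"
        using Y0 a0 q'pos by (intro min_pow_trunc) auto
      also have "(2 * Y / a) powr q' = \<sigma> powr m'"
        unfolding X using gpos by (simp add: powr_powr q'_def)
      finally have Tq: "T powr q \<le> min (\<sigma> powr m') 1" .
      have "integrand b \<gamma> \<gamma>' d p a t s x y \<le> \<rho> powr (-\<beta>) * min (\<sigma> powr m') 1"
        using I1 mult_left_mono[OF Tq, of "\<rho> powr (-\<beta>)"] by simp
      also have "\<rho> powr (-\<beta>) = \<rho>0 powr (-\<beta>) * \<sigma> powr (-\<beta>)"
      proof -
        have "\<rho> = \<rho>0 * \<sigma>" using r0pos by (simp add: \<sigma>_def)
        then show ?thesis using r0pos spos by (simp add: powr_mult)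
      qed
      also have "\<rho>0 powr (-\<beta>) * \<sigma> powr (-\<beta>) * min (\<sigma> powr m') 1
          = \<rho>0 powr (-\<beta>) * min (\<sigma> powr (m' - \<beta>)) (\<sigma> powr (-\<beta>))"
      proof -
        have "\<sigma> powr (-\<beta>) * min (\<sigma> powr m') 1 = min (\<sigma> powr (m' - \<beta>)) (\<sigma> powr (-\<beta>))"
        proof -
          have "\<sigma> powr (-\<beta>) * min (\<sigma> powr m') 1 = min (\<sigma> powr (-\<beta>) * \<sigma> powr m') (\<sigma> powr (-\<beta>) * 1)"
          proof (cases "\<sigma> powr m' \<le> 1")
            case True
            then show ?thesis using mult_left_mono[OF True, of "\<sigma> powr (-\<beta>)"] by (simp add: min_def)
          next
            case False
            then have "1 \<le> \<sigma> powr m'" by simp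
            then show ?thesis using False mult_left_mono[OF \<open>1 \<le> \<sigma> powr m'\<close>, of "\<sigma> powr (-\<beta>)"] by (simp add: min_def)
          qed
          also have "\<sigma> powr (-\<beta>) * \<sigma> powr m' = \<sigma> powr (m' - \<beta>)" by (simp add: powr_add[symmetric])
          finally show ?thesis by simp
        qed
        then show ?thesis by (simp add: mult.assoc)
      qed
      finally have I2: "integrand b \<gamma> \<gamma>' d p a t s x y \<le> \<rho>0 powr (-\<beta>) * min (\<sigma> powr (m' - \<beta>)) (\<sigma> powr (-\<beta>))" .
      have "ennreal (integrand b \<gamma> \<gamma>' d p a t s x y) \<le> ennreal (\<rho>0 powr (-\<beta>)) * ennreal (min (\<sigma> powr (m' - \<beta>)) (\<sigma> powr (-\<beta>)))"
        using I2 by (simp add: ennreal_mult[symmetric] ennreal_leI)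
      also have "\<dots> \<le> ennreal (\<rho>0 powr (-\<beta>)) * (Hf e1 e2 ((t - s) / \<rho>0^2) * (\<Prod>i\<in>Basis. Hf e1 e2 (((x - y) \<bullet> i) / \<rho>0)))"
        using scaled_prod[OF r0pos e(1,4) rp] unfolding ne1' ne2' \<sigma>_def \<rho>_def
        by (intro mult_left_mono) auto
      also have "\<dots> = G0 (t - s) * (\<Prod>i\<in>Basis. G1 ((x - y) \<bullet> i))"
        by (simp add: G0_def G1_def mult.assoc)
      finally show ?thesis .
    qed
    have rr: "\<rho>0 powr (-\<beta>) * \<rho>0^2 * \<rho>0 ^ DIM('a) = 2 powr \<alpha> * a powr (-\<alpha>)"
    proof -
      have pa: "\<rho>0^2 = \<rho>0 powr 2" using r0pos by (simp add: powr_numeral)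
      have pb: "\<rho>0 ^ DIM('a) = \<rho>0 powr real DIM('a)" using r0pos by (simp add: powr_realpow)
      have ex: "2 / \<gamma> * (-\<beta> + 2 + real DIM('a)) = -\<alpha>"
        using gpos by (simp add: alpha_eq n_def kk_def field_simps)
      have "\<rho>0 powr (-\<beta>) * \<rho>0^2 * \<rho>0 ^ DIM('a) = \<rho>0 powr (-\<beta> + 2 + real DIM('a))"
        unfolding pa pb by (simp only: powr_add)
      also have "\<dots> = (a / 2) powr (2 / \<gamma> * (-\<beta> + 2 + real DIM('a)))"
        unfolding \<rho>0_def by (simp only: powr_powr)
      also have "\<dots> = (a / 2) powr (-\<alpha>)" by (simp only: ex)
      also have "\<dots> = a powr (-\<alpha>) / 2 powr (-\<alpha>)"
        using a0 by (intro powr_divide)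
      also have "\<dots> = 2 powr \<alpha> * a powr (-\<alpha>)"
        by (simp only: powr_minus divide_inverse inverse_inverse_eq mult.commute)
      finally show ?thesis .
    qed
    have "FF a \<le> (\<integral>\<^sup>+t\<in>{t1..t2}. \<integral>\<^sup>+s\<in>{t1..t2}. \<integral>\<^sup>+x\<in>cbox aJ bJ. \<integral>\<^sup>+y\<in>cbox aJ bJ.
      G0 (t - s) * (\<Prod>b\<in>Basis. G1 ((x - y) \<bullet> b)) \<partial>lborel \<partial>lborel \<partial>lborel \<partial>lborel)"
      unfolding FF_def by (rule mono4) (rule pt)
    also have "\<dots> \<le> ennreal (t2 - t1) * (\<integral>\<^sup>+w. G0 w \<partial>lborel) * emeasure lborel (cbox aJ bJ) * (\<integral>\<^sup>+w. G1 w \<partial>lborel) ^ DIM('a)"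
      using t12 by (intro master1) auto
    also have "ennreal (t2 - t1) * (\<integral>\<^sup>+w. G0 w \<partial>lborel) * emeasure lborel (cbox aJ bJ) * (\<integral>\<^sup>+w. G1 w \<partial>lborel) ^ DIM('a)
       = W * ennreal (\<rho>0 powr (-\<beta>) * \<rho>0^2 * \<rho>0 ^ DIM('a))"
    proof -
      have g0: "(\<integral>\<^sup>+w. G0 w \<partial>lborel) = ennreal (\<rho>0 powr (-\<beta>)) * (ennreal (\<rho>0^2) * IH)"
        unfolding G0_def IH_def using r0pos by (simp add: nn_integral_cmult scale_int)
      have g1: "(\<integral>\<^sup>+w. G1 w \<partial>lborel) = ennreal \<rho>0 * IH"
        unfolding G1_def IH_def using r0pos by (simp add: scale_int)
      have "ennreal (\<rho>0 powr (-\<beta>) * \<rho>0^2 * \<rho>0 ^ DIM('a)) = ennreal (\<rho>0 powr (-\<beta>)) * ennreal (\<rho>0^2) * ennreal \<rho>0 ^ DIM('a)"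
        using r0pos by (simp add: ennreal_mult ennreal_power)
      then show ?thesis unfolding g0 g1 by (simp only: W_def power_mult_distrib mult_ac)
    qed
    also have "\<dots> = W * ennreal (2 powr \<alpha> * a powr (-\<alpha>))"
      unfolding rr ..
    also have "W * ennreal (2 powr \<alpha> * a powr (-\<alpha>)) \<le> ennreal C0 * ennreal (2 powr \<alpha>) * ennreal (a powr (-\<alpha>))"
      using C0 by (simp add: ennreal_mult mult.assoc mult_right_mono)
    finally show ?thesis .
  qed
  show ?thesis
    by (rule exI[of _ "C0 * 2 powr \<alpha>"]) (use C0 main in \<open>auto simp: ennreal_mult\<close>)
qed

end



lemma K_exists:
  fixes z :: real assumes "z > 0"
  shows "\<exists>K::nat. z \<le> 2 ^ K \<and> real K \<le> max 0 (log 2 z) + 1"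
proof -
  define K where "K = nat \<lceil>log 2 z\<rceil>"
  have "log 2 z \<le> real K" unfolding K_def by linarith
  then have "z \<le> 2 powr real K" using assms by (simp add: log_le_iff)
  then have "z \<le> 2 ^ K" by (simp add: powr_realpow)
  moreover have "real K \<le> max 0 (log 2 z) + 1" unfolding K_def by linarith
  ultimately show ?thesis by blast
qed

lemma dyadic_step:
  fixes r m M :: real
  assumes "r > 0" "m > 0" "M \<ge> 0"
  shows "min ((2 * r) powr m) 1 \<le> min (r powr m) 1 + 2 powr m * min (r powr m) (r powr (-M))"
proof (cases "r \<ge> 1")
  case True
  then have "1 \<le> r powr m" using assms by (simp add: ge_one_powr_ge_zero)
  then have "min (r powr m) 1 = 1" by simp
  moreover have "0 \<le> 2 powr m * min (r powr m) (r powr (-M))" by simp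
  moreover have "min ((2 * r) powr m) 1 \<le> 1" by simp
  ultimately show ?thesis by linarith
next
  case False
  have a: "r powr m \<le> 1" using False assms by (simp add: powr_le1)
  have b: "1 \<le> r powr (-M)" using False assms by (simp add: powr_minus one_le_inverse_iff ge_one_powr_ge_zero powr_le1)
  have "min ((2 * r) powr m) 1 \<le> (2 * r) powr m" by simp
  also have "\<dots> = 2 powr m * r powr m" using assms by (simp add: powr_mult)
  also have "\<dots> = 2 powr m * min (r powr m) (r powr (-M))" using a b by (simp add: min_def)
  finally show ?thesis by (simp add: add_increasing)
qed

lemma dyadic:
  fixes \<rho> lam m M :: real
  assumes "\<rho> > 0" "lam > 0" "m > 0" "M \<ge> 0"
  shows "min ((\<rho> / lam) powr m) 1 \<le> min ((\<rho> / (2 ^ K * lam)) powr m) 1 +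
    (\<Sum>j<K. 2 powr m * min ((\<rho> / (2 ^ (j+1) * lam)) powr m) ((\<rho> / (2 ^ (j+1) * lam)) powr (-M)))"
proof (induction K)
  case 0 then show ?case by simp
next
  case (Suc K)
  define r where "r = \<rho> / (2 ^ (K+1) * lam)"
  have r0: "r > 0" using assms by (simp add: r_def)
  have rr: "\<rho> / (2 ^ K * lam) = 2 * r" using assms by (simp add: r_def field_simps)
  have st: "min ((\<rho> / (2 ^ K * lam)) powr m) 1 \<le> min (r powr m) 1 + 2 powr m * min (r powr m) (r powr (-M))"
    unfolding rr by (rule dyadic_step[OF r0 assms(3,4)])
  show ?case using Suc.IH st by (simp add: r_def)
qed




lemma min_mult_pow:
  fixes \<sigma> :: real assumes "\<sigma> > 0"
  shows "\<sigma> powr c * min (\<sigma> powr x) (\<sigma> powr y) = min (\<sigma> powr (c + x)) (\<sigma> powr (c + y))"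
proof (cases "\<sigma> powr x \<le> \<sigma> powr y")
  case True
  then have "\<sigma> powr c * \<sigma> powr x \<le> \<sigma> powr c * \<sigma> powr y" by (rule mult_left_mono) simp
  then show ?thesis using True by (simp add: min_def powr_add)
next
  case False
  then have "\<sigma> powr c * \<sigma> powr y \<le> \<sigma> powr c * \<sigma> powr x" by (intro mult_left_mono) auto
  then show ?thesis using False by (simp add: min_def powr_add)
qed

lemma log_bound:
  fixes \<gamma> R N0 a \<rho>0 :: real and K :: nat
  assumes g: "\<gamma> > 0" and R: "R > 0" and N0: "N0 \<ge> 1" and a: "a > 0" "2 * a \<le> N0"
    and r0: "\<rho>0 = (a / 2) powr (2 / \<gamma>)"
    and K: "real K \<le> max 0 (log 2 (R / \<rho>0)) + 1"
  shows "real K \<le> ((1 + (\<bar>ln R\<bar> + 2 / \<gamma> * ln 2) / ln 2) / ln 2 + 2 / (\<gamma> * ln 2)) * ln (N0 / a)"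
proof -
  define l where "l = ln (N0 / a)"
  have l2: "l \<ge> ln 2" unfolding l_def using a by (intro ln_mono) (auto simp: field_simps)
  have ln2: "ln (2::real) > 0" by simp
  have lna: "- ln a \<le> l"
  proof -
    have "l = ln N0 - ln a" using a N0 by (simp add: l_def ln_div)
    moreover have "ln N0 \<ge> 0" using N0 by simp
    ultimately show ?thesis by linarith
  qed
  have lnr0: "ln \<rho>0 = 2 / \<gamma> * (ln a - ln 2)" using a by (simp add: r0 ln_powr ln_div)
  have "log 2 (R / \<rho>0) = (ln R - ln \<rho>0) / ln 2"
    using R a r0 by (simp add: log_def ln_div)
  also have "\<dots> \<le> (\<bar>ln R\<bar> + 2 / \<gamma> * ln 2 + 2 / \<gamma> * l) / ln 2"
  proof (rule divide_right_mono)
    have "- ln \<rho>0 = 2 / \<gamma> * ln 2 + 2 / \<gamma> * (- ln a)" using lnr0 by (simp add: algebra_simps)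
    also have "\<dots> \<le> 2 / \<gamma> * ln 2 + 2 / \<gamma> * l" using lna g by (intro add_left_mono mult_left_mono) auto
    finally show "ln R - ln \<rho>0 \<le> \<bar>ln R\<bar> + 2 / \<gamma> * ln 2 + 2 / \<gamma> * l" by linarith
  qed simp
  finally have lg: "log 2 (R / \<rho>0) \<le> (\<bar>ln R\<bar> + 2 / \<gamma> * ln 2 + 2 / \<gamma> * l) / ln 2" .
  have pos: "0 \<le> (\<bar>ln R\<bar> + 2 / \<gamma> * ln 2 + 2 / \<gamma> * l) / ln 2"
  proof -
    have "0 \<le> l" using l2 ln2 by linarith
    then show ?thesis using g ln2 by (intro divide_nonneg_pos add_nonneg_nonneg) auto
  qed
  have "real K \<le> (\<bar>ln R\<bar> + 2 / \<gamma> * ln 2 + 2 / \<gamma> * l) / ln 2 + 1"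
    using K lg pos by linarith
  also have "\<dots> = (1 + (\<bar>ln R\<bar> + 2 / \<gamma> * ln 2) / ln 2) + 2 / (\<gamma> * ln 2) * l"
    using ln2 g by (simp add: field_simps)
  also have "\<dots> \<le> (1 + (\<bar>ln R\<bar> + 2 / \<gamma> * ln 2) / ln 2) * (l / ln 2) + 2 / (\<gamma> * ln 2) * l"
  proof -
    have c0: "0 \<le> 1 + (\<bar>ln R\<bar> + 2 / \<gamma> * ln 2) / ln 2" using g ln2 by (intro add_nonneg_nonneg divide_nonneg_pos) auto
    have "1 \<le> l / ln 2" using l2 ln2 by simp
    from mult_left_mono[OF this c0] show ?thesis by simp
  qed
  also have "\<dots> = ((1 + (\<bar>ln R\<bar> + 2 / \<gamma> * ln 2) / ln 2) / ln 2 + 2 / (\<gamma> * ln 2)) * l"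
    by (simp add: field_simps)
  finally show ?thesis by (simp add: l_def)
qed

context L23 begin

lemma T_bound:
  assumes a0: "a > 0" and rp: "rho t s x y > 0" and m': "0 < m'" "m' \<le> m"
  shows "integrand b \<gamma> \<gamma>' d p a t s x y \<le> rho t s x y powr (-\<beta>) * min ((rho t s x y / ((a / 2) powr (2 / \<gamma>))) powr m') 1"
proof -
  define \<rho>0 where "\<rho>0 = (a / 2) powr (2 / \<gamma>)"
  have r0pos: "\<rho>0 > 0" using a0 by (simp add: \<rho>0_def)
  have r0g: "\<rho>0 powr (\<gamma> / 2) = a / 2" using a0 gpos by (simp add: \<rho>0_def powr_powr)
  define q' where "q' = 2 * m' / \<gamma>"
  have q'pos: "q' > 0" using m' gpos by (simp add: q'_def)
  have q'le: "q' \<le> q" using m' gpos by (simp add: q'_def q_eq divide_right_mono)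
  define \<rho> where "\<rho> = rho t s x y"
  define \<sigma> where "\<sigma> = \<rho> / \<rho>0"
  have rpos: "\<rho> > 0" using rp by (simp add: \<rho>_def)
  define U where "U = \<bar>t - s\<bar> powr (\<gamma> / 4) + norm (x - y) powr (\<gamma> / 2)"
  define T where "T = trunc_ratio U a"
  define Y where "Y = \<rho> powr (\<gamma>/2)"
  have Y0: "Y > 0" using rpos by (simp add: Y_def)
  have UY: "Y \<le> U" "U \<le> 2 * Y" using integrand_le(2,3)[OF rp] by (auto simp: Y_def U_def \<rho>_def)
  note tb = trunc_bounds[OF a0 Y0 UY]
  have I1: "integrand b \<gamma> \<gamma>' d p a t s x y \<le> \<rho> powr (-\<beta>) * T powr q"
    using integrand_le(1)[OF rp] by (simp add: \<rho>_def T_def U_def)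
  have X: "2 * Y / a = \<sigma> powr (\<gamma>/2)"
  proof -
    have "\<sigma> powr (\<gamma>/2) = \<rho> powr (\<gamma>/2) / \<rho>0 powr (\<gamma>/2)" using rpos r0pos by (simp add: \<sigma>_def powr_divide)
    also have "\<dots> = Y / (a / 2)" by (simp only: r0g Y_def)
    finally have "\<sigma> powr (\<gamma>/2) = Y / (a / 2)" .
    then show ?thesis using a0 by simp
  qed
  have "T powr q \<le> T powr q'"
    using tb q'le by (intro powr_mono') (auto simp: T_def)
  also have "\<dots> \<le> min (2 * Y / a) 1 powr q'"
    using tb q'pos by (intro powr_mono2) (auto simp: T_def)
  also have "\<dots> = min ((2 * Y / a) powr q') 1"
    using Y0 a0 q'pos by (intro min_pow_trunc) auto
  also have "(2 * Y / a) powr q' = \<sigma> powr m'"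
    unfolding X using gpos by (simp add: powr_powr q'_def)
  finally have Tq: "T powr q \<le> min (\<sigma> powr m') 1" .
  show ?thesis
    using I1 mult_left_mono[OF Tq, of "\<rho> powr (-\<beta>)"] by (simp add: \<rho>_def \<sigma>_def \<rho>0_def)
qed

end



context L23 begin

lemma case_zero:
  assumes a0: "\<alpha> = 0" and N0: "N0 \<ge> 2 * N + 1"
  shows "\<exists>C>0. \<forall>a\<in>{0<..N}. FF a \<le> ennreal C * ennreal (ln (N0 / a))"
proof -
  have bn: "\<beta> = n" using a0 gpos by (simp add: alpha_eq)
  obtain R L where RL: "R > 0" "L > 0"
    "\<And>t s x y. t \<in> {t1..t2} \<Longrightarrow> s \<in> {t1..t2} \<Longrightarrow> x \<in> cbox aJ bJ \<Longrightarrow> y \<in> cbox aJ bJ \<Longrightarrow>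
       rho t s x y \<le> R \<and> \<bar>t - s\<bar> \<le> L \<and> (\<forall>i\<in>Basis. \<bar>(x - y) \<bullet> i\<bar> \<le> L)"
    by (rule domain) blast
  define m' where "m' = min m n"
  have m'pos: "m' > 0" using m_gt bn npos by (simp add: m'_def)
  have m'le: "m' \<le> m" "m' \<le> n" by (auto simp: m'_def)
  define e1 where "e1 = (n - m') / n"
  have e: "0 \<le> e1" "e1 < 1" "e1 \<le> 2"
    using m'pos m'le npos by (auto simp: e1_def field_simps)
  have ne1: "- (2 + real DIM('a)) * e1 = m' - n" using npos by (simp add: e1_def n_def kk_def field_simps)
  have ne2: "- (2 + real DIM('a)) * 2 = - 2 * n" by (simp add: n_def kk_def)
  define IH where "IH = (\<integral>\<^sup>+w. Hf e1 2 w \<partial>lborel)"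
  have IHfin: "IH < top" unfolding IH_def using Hf_finite[of e1 2] e by simp
  define IP where "IP = (\<integral>\<^sup>+w. pw e1 w * indicator {-L..L} w \<partial>lborel)"
  have IPfin: "IP < top" unfolding IP_def using pw_ind_finite[of e1 L] e RL by simp
  define Wd where "Wd = ennreal (t2 - t1) * IH * emeasure lborel (cbox aJ bJ) * IH ^ DIM('a)"
  define Wl where "Wl = ennreal (t2 - t1) * IP * emeasure lborel (cbox aJ bJ) * IP ^ DIM('a)"
  have Wdfin: "Wd < top" unfolding Wd_def using IHfin emeasure_lborel_cbox_finite[of aJ bJ]
    by (simp add: ennreal_mult_less_top power_less_top_ennreal)
  have Wlfin: "Wl < top" unfolding Wl_def using IPfin emeasure_lborel_cbox_finite[of aJ bJ]
    by (simp add: ennreal_mult_less_top power_less_top_ennreal)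
  obtain Cd where Cd: "Cd > 0" "Wd \<le> ennreal Cd" using fin_const[OF Wdfin] by blast
  obtain Cl where Cl: "Cl > 0" "Wl \<le> ennreal Cl" using fin_const[OF Wlfin] by blast
  define A where "A = (1 + (\<bar>ln R\<bar> + 2 / \<gamma> * ln 2) / ln 2) / ln 2 + 2 / (\<gamma> * ln 2)"
  have Apos: "A > 0" unfolding A_def using gpos
    by (intro add_pos_pos divide_pos_pos add_pos_nonneg mult_nonneg_nonneg) auto
  define C where "C = A * Cd * 2 powr m' + R powr (-m') * Cl / ln 2"
  have Cpos: "C > 0" unfolding C_def using Apos Cd Cl RL
    by (intro add_pos_pos mult_pos_pos divide_pos_pos) auto
  have main: "FF a \<le> ennreal C * ennreal (ln (N0 / a))" if a: "a \<in> {0<..N}" for a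
  proof -
    have apos: "a > 0" using a by simp
    define \<rho>0 where "\<rho>0 = (a / 2) powr (2 / \<gamma>)"
    have r0pos: "\<rho>0 > 0" using apos by (simp add: \<rho>0_def)
    obtain K :: nat where K: "R / \<rho>0 \<le> 2 ^ K" "real K \<le> max 0 (log 2 (R / \<rho>0)) + 1"
      using K_exists[of "R / \<rho>0"] RL r0pos by auto
    have RK: "R \<le> 2 ^ K * \<rho>0" using K(1) r0pos by (simp add: field_simps)
    define \<mu> where "\<mu> j = 2 ^ (j + 1) * \<rho>0" for j :: nat
    have mupos: "\<mu> j > 0" for j using r0pos by (simp add: \<mu>_def)
    define G0 where "G0 j w = (if j < K then ennreal (2 powr m' * \<mu> j powr (-n)) * Hf e1 2 (w / (\<mu> j)^2)
                               else ennreal (R powr (-m')) * (pw e1 w * indicator {-L..L} w))" for j w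
    define G1 where "G1 j w = (if j < K then Hf e1 2 (w / \<mu> j) else pw e1 w * indicator {-L..L} w)" for j w
    have [measurable]: "G0 j \<in> borel_measurable borel" "G1 j \<in> borel_measurable borel" for j
      unfolding G0_def G1_def by measurable
    have pt: "ennreal (integrand b \<gamma> \<gamma>' d p a t s x y) \<le> (\<Sum>j<Suc K. G0 j (t - s) * (\<Prod>i\<in>Basis. G1 j ((x - y) \<bullet> i)))"
      if dom: "t \<in> {t1..t2}" "s \<in> {t1..t2}" "x \<in> cbox aJ bJ" "y \<in> cbox aJ bJ" for t s x y
    proof (cases "rho t s x y = 0")
      case True then show ?thesis by (simp add: rho0)
    next
      case False
      then have rp: "rho t s x y > 0" using rho_nonneg[of t s x y] by simp
      note D = RL(3)[OF dom]
      define \<rho> where "\<rho> = rho t s x y"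
      have rpos: "\<rho> > 0" using rp by (simp add: \<rho>_def)
      have rR: "\<rho> \<le> R" using D by (simp add: \<rho>_def)
      define r where "r j = \<rho> / \<mu> j" for j
      have rjpos: "r j > 0" for j using rpos mupos[of j] by (simp add: r_def)
      define lastB where "lastB = R powr (-m') * \<rho> powr (m' - n)"
      define tB where "tB j = 2 powr m' * \<mu> j powr (-n) * min (r j powr (m' - n)) (r j powr (-2 * n))" for j
      have I1: "integrand b \<gamma> \<gamma>' d p a t s x y \<le> \<rho> powr (-n) * min ((\<rho> / \<rho>0) powr m') 1"
        using T_bound[OF apos rp m'pos m'le(1)] bn by (simp add: \<rho>_def \<rho>0_def)
      have dy: "min ((\<rho> / \<rho>0) powr m') 1 \<le> min ((\<rho> / (2 ^ K * \<rho>0)) powr m') 1 +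
          (\<Sum>j<K. 2 powr m' * min ((r j) powr m') ((r j) powr (-n)))"
        using dyadic[OF rpos r0pos m'pos, of n K] npos by (simp add: r_def \<mu>_def)
      have last: "\<rho> powr (-n) * min ((\<rho> / (2 ^ K * \<rho>0)) powr m') 1 \<le> lastB"
      proof -
        have "min ((\<rho> / (2 ^ K * \<rho>0)) powr m') 1 \<le> (\<rho> / (2 ^ K * \<rho>0)) powr m'" by simp
        also have "\<dots> = \<rho> powr m' / (2 ^ K * \<rho>0) powr m'"
          using rpos r0pos by (intro powr_divide)
        also have "\<dots> = \<rho> powr m' * (2 ^ K * \<rho>0) powr (-m')"
          by (simp only: powr_minus divide_inverse)
        also have "\<dots> \<le> \<rho> powr m' * R powr (-m')"
          by (intro mult_left_mono powr_mono2') (use m'pos RL RK in auto)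
        finally have "\<rho> powr (-n) * min ((\<rho> / (2 ^ K * \<rho>0)) powr m') 1 \<le> \<rho> powr (-n) * (\<rho> powr m' * R powr (-m'))"
          by (rule mult_left_mono) simp
        also have "\<dots> = lastB" by (simp add: lastB_def powr_add[symmetric] mult_ac)
        finally show ?thesis .
      qed
      have tj: "\<rho> powr (-n) * (2 powr m' * min ((r j) powr m') ((r j) powr (-n))) = tB j" for j
      proof -
        have "\<rho> = \<mu> j * r j" using mupos[of j] by (simp add: r_def)
        then have "\<rho> powr (-n) = \<mu> j powr (-n) * r j powr (-n)" using mupos[of j] rjpos[of j] by (simp add: powr_mult)
        moreover have "r j powr (-n) * min ((r j) powr m') ((r j) powr (-n)) = min (r j powr (m' - n)) (r j powr (-2 * n))"
          using min_mult_pow[OF rjpos[of j], of "-n" m' "-n"] by simp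
        ultimately show ?thesis unfolding tB_def by (simp add: mult_ac)
      qed
      have realb: "integrand b \<gamma> \<gamma>' d p a t s x y \<le> lastB + (\<Sum>j<K. tB j)"
      proof -
        have "integrand b \<gamma> \<gamma>' d p a t s x y \<le> \<rho> powr (-n) * (min ((\<rho> / (2 ^ K * \<rho>0)) powr m') 1 +
          (\<Sum>j<K. 2 powr m' * min ((r j) powr m') ((r j) powr (-n))))"
          using I1 mult_left_mono[OF dy, of "\<rho> powr (-n)"] by simp
        also have "\<dots> = \<rho> powr (-n) * min ((\<rho> / (2 ^ K * \<rho>0)) powr m') 1 +
          (\<Sum>j<K. \<rho> powr (-n) * (2 powr m' * min ((r j) powr m') ((r j) powr (-n))))"
          by (simp add: distrib_left sum_distrib_left)
        also have "\<dots> \<le> lastB + (\<Sum>j<K. tB j)" using last tj by simp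
        finally show ?thesis .
      qed
      have tB0: "tB j \<ge> 0" for j by (simp add: tB_def)
      have lB0: "lastB \<ge> 0" by (simp add: lastB_def)
      have lastE: "ennreal lastB \<le> G0 K (t - s) * (\<Prod>i\<in>Basis. G1 K ((x - y) \<bullet> i))"
      proof -
        have "ennreal lastB = ennreal (R powr (-m')) * ennreal (min (\<rho> powr (-(2 + real DIM('a)) * e1)) (\<rho> powr (-(2 + real DIM('a)) * e1)))"
          unfolding ne1 by (simp add: lastB_def ennreal_mult)
        also have "\<dots> \<le> ennreal (R powr (-m')) * (Hf e1 e1 (t - s) * (\<Prod>i\<in>Basis. Hf e1 e1 ((x - y) \<bullet> i)))"
          by (intro mult_left_mono prod_bound) (use e rpos rho_ge in \<open>auto simp: \<rho>_def\<close>)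
        also have "\<dots> = G0 K (t - s) * (\<Prod>i\<in>Basis. G1 K ((x - y) \<bullet> i))"
        proof -
          have "(\<Prod>i\<in>Basis. G1 K ((x - y) \<bullet> i)) = (\<Prod>i\<in>Basis. Hf e1 e1 ((x - y) \<bullet> i))"
            by (rule prod.cong) (use D in \<open>auto simp: G1_def Hf_same abs_le_iff\<close>)
          moreover have "G0 K (t - s) = ennreal (R powr (-m')) * Hf e1 e1 (t - s)"
            using D by (auto simp: G0_def Hf_same abs_le_iff)
          ultimately show ?thesis by (simp add: mult.assoc)
        qed
        finally show ?thesis .
      qed
      have tE: "ennreal (tB j) \<le> G0 j (t - s) * (\<Prod>i\<in>Basis. G1 j ((x - y) \<bullet> i))" if j: "j < K" for j
      proof -
        have "ennreal (tB j) = ennreal (2 powr m' * \<mu> j powr (-n)) *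
            ennreal (min ((\<rho> / \<mu> j) powr (-(2 + real DIM('a)) * e1)) ((\<rho> / \<mu> j) powr (-(2 + real DIM('a)) * 2)))"
          unfolding ne1 ne2 by (simp add: tB_def ennreal_mult r_def)
        also have "\<dots> \<le> ennreal (2 powr m' * \<mu> j powr (-n)) * (Hf e1 2 ((t - s) / (\<mu> j)^2) * (\<Prod>i\<in>Basis. Hf e1 2 (((x - y) \<bullet> i) / \<mu> j)))"
          using scaled_prod[OF mupos[of j] e(1) e(3) rp] unfolding \<rho>_def by (intro mult_left_mono) auto
        also have "\<dots> = G0 j (t - s) * (\<Prod>i\<in>Basis. G1 j ((x - y) \<bullet> i))"
          using j by (simp add: G0_def G1_def mult.assoc)
        finally show ?thesis .
      qed
      have "ennreal (integrand b \<gamma> \<gamma>' d p a t s x y) \<le> ennreal (lastB + (\<Sum>j<K. tB j))"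
        using realb by (rule ennreal_leI)
      also have "\<dots> = ennreal lastB + (\<Sum>j<K. ennreal (tB j))"
        using lB0 tB0 by (simp add: ennreal_plus sum_ennreal sum_nonneg)
      also have "\<dots> \<le> G0 K (t - s) * (\<Prod>i\<in>Basis. G1 K ((x - y) \<bullet> i)) + (\<Sum>j<K. G0 j (t - s) * (\<Prod>i\<in>Basis. G1 j ((x - y) \<bullet> i)))"
        by (intro add_mono lastE sum_mono tE) auto
      also have "\<dots> = (\<Sum>j<Suc K. G0 j (t - s) * (\<Prod>i\<in>Basis. G1 j ((x - y) \<bullet> i)))"
        by (simp add: add.commute)
      finally show ?thesis .
    qed
    have termd: "ennreal (t2 - t1) * (\<integral>\<^sup>+w. G0 j w \<partial>lborel) * emeasure lborel (cbox aJ bJ) * (\<integral>\<^sup>+w. G1 j w \<partial>lborel) ^ DIM('a)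
        = Wd * ennreal (2 powr m')" if j: "j < K" for j
    proof -
      have g0: "(\<integral>\<^sup>+w. G0 j w \<partial>lborel) = ennreal (2 powr m' * \<mu> j powr (-n)) * (ennreal ((\<mu> j)^2) * IH)"
        unfolding G0_def IH_def using j mupos[of j] by (simp add: nn_integral_cmult scale_int)
      have g1: "(\<integral>\<^sup>+w. G1 j w \<partial>lborel) = ennreal (\<mu> j) * IH"
        unfolding G1_def IH_def using j mupos[of j] by (simp add: scale_int)
      have rr: "2 powr m' * \<mu> j powr (-n) * (\<mu> j)^2 * \<mu> j ^ DIM('a) = 2 powr m'"
      proof -
        have pa: "(\<mu> j)^2 = \<mu> j powr 2" using mupos[of j] by (simp add: powr_numeral)
        have pb: "\<mu> j ^ DIM('a) = \<mu> j powr real DIM('a)" using mupos[of j] by (simp add: powr_realpow)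
        have "\<mu> j powr (-n) * (\<mu> j)^2 * \<mu> j ^ DIM('a) = \<mu> j powr (-n + 2 + real DIM('a))"
          unfolding pa pb by (simp only: powr_add)
        also have "-n + 2 + real DIM('a) = 0" by (simp add: n_def kk_def)
        finally have "\<mu> j powr (-n) * (\<mu> j)^2 * \<mu> j ^ DIM('a) = 1" using mupos[of j] by simp
        then show ?thesis by (simp add: mult.assoc)
      qed
      have "ennreal (2 powr m' * \<mu> j powr (-n) * (\<mu> j)^2 * \<mu> j ^ DIM('a))
          = ennreal (2 powr m' * \<mu> j powr (-n)) * ennreal ((\<mu> j)^2) * ennreal (\<mu> j) ^ DIM('a)"
        using mupos[of j] by (simp add: ennreal_mult ennreal_power)
      then have "ennreal (t2 - t1) * (\<integral>\<^sup>+w. G0 j w \<partial>lborel) * emeasure lborel (cbox aJ bJ) * (\<integral>\<^sup>+w. G1 j w \<partial>lborel) ^ DIM('a)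
          = Wd * ennreal (2 powr m' * \<mu> j powr (-n) * (\<mu> j)^2 * \<mu> j ^ DIM('a))"
        unfolding g0 g1 by (simp only: Wd_def power_mult_distrib mult_ac)
      then show ?thesis unfolding rr .
    qed
    have terml: "ennreal (t2 - t1) * (\<integral>\<^sup>+w. G0 K w \<partial>lborel) * emeasure lborel (cbox aJ bJ) * (\<integral>\<^sup>+w. G1 K w \<partial>lborel) ^ DIM('a)
        = ennreal (R powr (-m')) * Wl"
    proof -
      have g0: "(\<integral>\<^sup>+w. G0 K w \<partial>lborel) = ennreal (R powr (-m')) * IP"
        unfolding G0_def IP_def by (simp add: nn_integral_cmult)
      have g1: "(\<integral>\<^sup>+w. G1 K w \<partial>lborel) = IP"
        unfolding G1_def IP_def by simp
      show ?thesis unfolding g0 g1 by (simp only: Wl_def mult_ac)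
    qed
    have "FF a \<le> (\<integral>\<^sup>+t\<in>{t1..t2}. \<integral>\<^sup>+s\<in>{t1..t2}. \<integral>\<^sup>+x\<in>cbox aJ bJ. \<integral>\<^sup>+y\<in>cbox aJ bJ.
      (\<Sum>j<Suc K. G0 j (t - s) * (\<Prod>i\<in>Basis. G1 j ((x - y) \<bullet> i))) \<partial>lborel \<partial>lborel \<partial>lborel \<partial>lborel)"
      unfolding FF_def by (rule mono4) (rule pt)
    also have "\<dots> \<le> (\<Sum>j<Suc K. ennreal (t2 - t1) * (\<integral>\<^sup>+w. G0 j w \<partial>lborel) * emeasure lborel (cbox aJ bJ) * (\<integral>\<^sup>+w. G1 j w \<partial>lborel) ^ DIM('a))"
      using t12 by (intro master) auto
    also have "\<dots> = (\<Sum>j<K. Wd * ennreal (2 powr m')) + ennreal (R powr (-m')) * Wl"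
      using termd terml by simp
    also have "\<dots> \<le> (\<Sum>j<K. ennreal Cd * ennreal (2 powr m')) + ennreal (R powr (-m')) * ennreal Cl"
      using Cd Cl by (intro add_mono sum_mono mult_right_mono mult_left_mono) auto
    also have "\<dots> = ennreal (real K * Cd * 2 powr m' + R powr (-m') * Cl)"
    proof -
      have s1: "(\<Sum>j<K. ennreal Cd * ennreal (2 powr m')) = of_nat K * (ennreal Cd * ennreal (2 powr m'))" by simp
      also have "\<dots> = ennreal (real K) * ennreal Cd * ennreal (2 powr m')"
        by (simp only: ennreal_of_nat_eq_real_of_nat mult.assoc)
      also have "\<dots> = ennreal (real K * Cd * 2 powr m')" using Cd by (simp add: ennreal_mult)
      finally have s1: "(\<Sum>j<K. ennreal Cd * ennreal (2 powr m')) = ennreal (real K * Cd * 2 powr m')" .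
      have s2: "ennreal (R powr (-m')) * ennreal Cl = ennreal (R powr (-m') * Cl)" using Cl by (simp add: ennreal_mult)
      have s3: "ennreal (real K * Cd * 2 powr m') + ennreal (R powr (-m') * Cl) = ennreal (real K * Cd * 2 powr m' + R powr (-m') * Cl)"
        using Cd Cl by (intro ennreal_plus[symmetric]) auto
      show ?thesis unfolding s1 s2 s3 ..
    qed
    also have "\<dots> \<le> ennreal (C * ln (N0 / a))"
    proof (rule ennreal_leI)
      have KA: "real K \<le> A * ln (N0 / a)"
        unfolding A_def using log_bound[OF gpos RL(1) _ apos _ \<rho>0_def K(2)] N0 a Npos by auto
      have l2: "ln (N0 / a) \<ge> ln 2" using a N0 Npos by (intro ln_mono) (auto simp: field_simps)
      have ln2: "ln (2::real) > 0" by simp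
      have "real K * Cd * 2 powr m' \<le> A * ln (N0 / a) * Cd * 2 powr m'"
        using KA Cd by (intro mult_right_mono) auto
      moreover have "R powr (-m') * Cl \<le> R powr (-m') * Cl / ln 2 * ln (N0 / a)"
      proof -
        have "1 \<le> ln (N0 / a) / ln 2" using l2 ln2 by simp
        then have "R powr (-m') * Cl * 1 \<le> R powr (-m') * Cl * (ln (N0 / a) / ln 2)"
          using Cl by (intro mult_left_mono) auto
        then show ?thesis by simp
      qed
      ultimately show "real K * Cd * 2 powr m' + R powr (-m') * Cl \<le> C * ln (N0 / a)"
        unfolding C_def by (simp add: algebra_simps)
    qed
    also have "\<dots> = ennreal C * ennreal (ln (N0 / a))"
      using Cpos by (simp add: ennreal_mult')
    finally show ?thesis .
  qed
  show ?thesis using Cpos main by blast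
qed

end



theorem lemma2p3:
  fixes T t1 t2 :: real and aJ bJ :: "real ^ 'k" and d :: nat
  assumes "T > 0" and "0 < t1" and "t1 < t2" and "t2 \<le> T"
    and "\<forall>i. aJ $ i < bJ $ i"
    and "d \<ge> 1"
  shows "\<forall>N b \<gamma> \<gamma>' p. N > 0 \<and> b > 0 \<and> \<gamma> > 0 \<and> \<gamma>' > \<gamma> \<and>
           p > 2 * real d / \<gamma> * (\<gamma>' * b - 2 * real CARD('k) - 4) \<longrightarrow>
         (\<exists>N0min. \<forall>N0 \<ge> N0min. \<exists>C::real. C > 0 \<and>
           (\<forall>a \<in> {0..N}.
              (\<integral>\<^sup>+ t \<in> {t1..t2}. \<integral>\<^sup>+ s \<in> {t1..t2}. \<integral>\<^sup>+ x \<in> cbox aJ bJ. \<integral>\<^sup>+ y \<in> cbox aJ bJ.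
                  ennreal (integrand b \<gamma> \<gamma>' d p a t s x y) \<partial>lborel \<partial>lborel \<partial>lborel \<partial>lborel)
              \<le> ennreal C * Kfun N0 (\<gamma>' / \<gamma> * b - (4 + 2 * real CARD('k)) / \<gamma>) a))"
proof (intro allI impI)
  fix N b \<gamma> \<gamma>' p :: real
  assume H: "N > 0 \<and> b > 0 \<and> \<gamma> > 0 \<and> \<gamma>' > \<gamma> \<and> p > 2 * real d / \<gamma> * (\<gamma>' * b - 2 * real CARD('k) - 4)"
  interpret L: L23 t1 t2 aJ bJ N b \<gamma> \<gamma>' p d
    by unfold_locales (use H assms in auto)
  have al: "\<gamma>' / \<gamma> * b - (4 + 2 * real CARD('k)) / \<gamma> = L.\<alpha>"
    by (simp add: L.\<alpha>_def L.kk_def)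
  have FF: "(\<integral>\<^sup>+ t \<in> {t1..t2}. \<integral>\<^sup>+ s \<in> {t1..t2}. \<integral>\<^sup>+ x \<in> cbox aJ bJ. \<integral>\<^sup>+ y \<in> cbox aJ bJ.
                  ennreal (integrand b \<gamma> \<gamma>' d p a t s x y) \<partial>lborel \<partial>lborel \<partial>lborel \<partial>lborel) = L.FF a" for a
    by (simp add: L.FF_def)
  have main: "\<exists>N0min. \<forall>N0 \<ge> N0min. \<exists>C::real. C > 0 \<and> (\<forall>a\<in>{0..N}. L.FF a \<le> ennreal C * Kfun N0 L.\<alpha> a)"
  proof (rule exI[of _ "2 * N + 1"], intro allI impI)
    fix N0 :: real assume N0: "N0 \<ge> 2 * N + 1"
    show "\<exists>C>0. \<forall>a\<in>{0..N}. L.FF a \<le> ennreal C * Kfun N0 L.\<alpha> a"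
    proof (cases "L.\<alpha> < 0")
      case True
      obtain C where C: "C > 0" "\<forall>a\<in>{0..N}. L.FF a \<le> ennreal C" using L.case_neg[OF True] by blast
      show ?thesis using C True by (intro exI[of _ C]) (auto simp: Kfun_def)
    next
      case False
      show ?thesis
      proof (cases "L.\<alpha> = 0")
        case True
        obtain C where C: "C > 0" "\<forall>a\<in>{0<..N}. L.FF a \<le> ennreal C * ennreal (ln (N0 / a))"
          using L.case_zero[OF True N0] by blast
        have "L.FF a \<le> ennreal C * Kfun N0 L.\<alpha> a" if a: "a \<in> {0..N}" for a
        proof (cases "a = 0")
          case True then show ?thesis using C \<open>L.\<alpha> = 0\<close> by (simp add: Kfun_def ennreal_mult_top)
        next
          case False then show ?thesis using C a \<open>L.\<alpha> = 0\<close> by (auto simp: Kfun_def)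
        qed
        then show ?thesis using C by blast
      next
        case F2: False
        then have ap: "L.\<alpha> > 0" using False by simp
        obtain C where C: "C > 0" "\<forall>a\<in>{0<..N}. L.FF a \<le> ennreal C * ennreal (a powr (-L.\<alpha>))"
          using L.case_pos[OF ap] by blast
        have "L.FF a \<le> ennreal C * Kfun N0 L.\<alpha> a" if a: "a \<in> {0..N}" for a
        proof (cases "a = 0")
          case True then show ?thesis using C ap by (simp add: Kfun_def ennreal_mult_top)
        next
          case False then show ?thesis using C a ap by (auto simp: Kfun_def)
        qed
        then show ?thesis using C by blast
      qed
    qed
  qed
  then show "\<exists>N0min. \<forall>N0 \<ge> N0min. \<exists>C::real. C > 0 \<and>
           (\<forall>a \<in> {0..N}.
              (\<integral>\<^sup>+ t \<in> {t1..t2}. \<integral>\<^sup>+ s \<in> {t1..t2}. \<integral>\<^sup>+ x \<in> cbox aJ bJ. \<integral>\<^sup>+ y \<in> cbox aJ bJ.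
                  ennreal (integrand b \<gamma> \<gamma>' d p a t s x y) \<partial>lborel \<partial>lborel \<partial>lborel \<partial>lborel)
              \<le> ennreal C * Kfun N0 (\<gamma>' / \<gamma> * b - (4 + 2 * real CARD('k)) / \<gamma>) a)"
    by (simp only: al FF)
qed


end
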